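(* The Eigenvector Method violates invariance to $\alpha$-transformation on a triad: there exist $n$ (indeed $n=4$) and pairwise comparison matrices $\mathbf{A},\hat{\mathbf{A}}\in\mathcal{A}^{n\times n}$ such that $\hat{\mathbf{A}}$ is obtained from $\mathbf{A}$ by an $\alpha$-transformation on a triad but the Eigenvector Method weight vectors of $\mathbf{A}$ and $\hat{\mathbf{A}}$ differ.
   Context: A pairwise comparison matrix of size $n$ is a matrix $\mathbf{A} = [a_{i,j}]$ with positive entries and $a_{j,i} = 1/a_{i,j}$ for all $i,j$; $\mathcal{A}^{n\times n}$ denotes the set of these. The Eigenvector Method assigns to $\mathbf{A}$ the vector $\mathbf{w}$ with positive entries, $\sum_i w_i = 1$, and $\mathbf{A}\mathbf{w} = \lambda_{\max}\mathbf{w}$, where $\lambda_{\max}$ is the Perron (maximal) eigenvalue of $\mathbf{A}$. An $\alpha$-transformation on the triad $(i,j,k)$ (three distinct indices), with $\alpha>0$, maps $\mathbf{A}$ to $\hat{\mathbf{A}}$ with $\hat a_{i,j} = \alpha a_{i,j}$, $\hat a_{j,i} = a_{j,i}/\alpha$, $\hat a_{j,k} = \alpha a_{j,k}$, $\hat a_{k,j} = a_{k,j}/\alpha$, $\hat a_{k,i} = \alpha a_{k,i}$, $\hat a_{i,k} = a_{i,k}/\alpha$, all other entries unchanged. *)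

theory Defs
  imports "HOL-Analysis.Analysis"
begin

text \<open>Square matrices of size n are represented as functions nat => nat => real,
  with indices ranging over {0..<n}; entries outside this range are irrelevant.\<close>

definition mat_vec :: "nat \<Rightarrow> (nat \<Rightarrow> nat \<Rightarrow> real) \<Rightarrow> (nat \<Rightarrow> real) \<Rightarrow> nat \<Rightarrow> real" where
  "mat_vec n A w i = (\<Sum>j<n. A i j * w j)"

definition is_PCM :: "nat \<Rightarrow> (nat \<Rightarrow> nat \<Rightarrow> real) \<Rightarrow> bool" where
  "is_PCM n A \<longleftrightarrow> (\<forall>i<n. \<forall>j<n. A i j > 0 \<and> A j i = 1 / A i j)"

definition is_eigenvalue :: "nat \<Rightarrow> (nat \<Rightarrow> nat \<Rightarrow> real) \<Rightarrow> real \<Rightarrow> bool" where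
  "is_eigenvalue n A l \<longleftrightarrow>
     (\<exists>v. (\<exists>i<n. v i \<noteq> 0) \<and> (\<forall>i<n. mat_vec n A v i = l * v i))"

definition lambda_max :: "nat \<Rightarrow> (nat \<Rightarrow> nat \<Rightarrow> real) \<Rightarrow> real" where
  "lambda_max n A = (GREATEST l. is_eigenvalue n A l)"

text \<open>Eigenvector Method: the positive, sum-normalised Perron eigenvector,
  as a vector on {0..<n} (set to 0 outside the index range for uniqueness).\<close>
definition EM :: "nat \<Rightarrow> (nat \<Rightarrow> nat \<Rightarrow> real) \<Rightarrow> (nat \<Rightarrow> real)" where
  "EM n A = (THE w. (\<forall>i<n. w i > 0) \<and> (\<forall>i. i \<ge> n \<longrightarrow> w i = 0) \<and>
                    (\<Sum>i<n. w i) = 1 \<and>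
                    (\<forall>i<n. mat_vec n A w i = lambda_max n A * w i))"

definition alpha_transform ::
  "real \<Rightarrow> nat \<Rightarrow> nat \<Rightarrow> nat \<Rightarrow> (nat \<Rightarrow> nat \<Rightarrow> real) \<Rightarrow> (nat \<Rightarrow> nat \<Rightarrow> real)" where
  "alpha_transform \<alpha> i j k A = (\<lambda>p q.
     if (p, q) = (i, j) \<or> (p, q) = (j, k) \<or> (p, q) = (k, i) then \<alpha> * A p q
     else if (p, q) = (j, i) \<or> (p, q) = (k, j) \<or> (p, q) = (i, k) then A p q / \<alpha>
     else A p q)"

end

theory Submission
  imports Defs
begin

definition JJ :: "nat \<Rightarrow> nat \<Rightarrow> real" where "JJ = (\<lambda>p q. 1)"
definition AA :: "nat \<Rightarrow> nat \<Rightarrow> real" where "AA = alpha_transform 2 0 1 2 JJ"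

lemma sum4: fixes f :: "nat \<Rightarrow> real" shows "(\<Sum>j<4. f j) = f 0 + f 1 + f 2 + (f 3::real)"
  by (simp add: eval_nat_numeral)

lemma all4: "(\<forall>i<(4::nat). P i) \<longleftrightarrow> P 0 \<and> P 1 \<and> P 2 \<and> P 3"
  by (auto simp: eval_nat_numeral less_Suc_eq)

lemma mvJ: "mat_vec 4 JJ v i = v 0 + v 1 + v 2 + v 3"
  by (simp add: mat_vec_def JJ_def sum4)

lemma mvA:
  "mat_vec 4 AA v 0 = v 0 + 2 * v 1 + v 2 / 2 + v 3"
  "mat_vec 4 AA v 1 = v 0 / 2 + v 1 + 2 * v 2 + v 3"
  "mat_vec 4 AA v 2 = 2 * v 0 + v 1 / 2 + v 2 + v 3"
  "mat_vec 4 AA v 3 = v 0 + v 1 + v 2 + v 3"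
  by (simp_all add: mat_vec_def AA_def JJ_def alpha_transform_def sum4)

lemma exi4: "(\<exists>i<(4::nat). P i) \<longleftrightarrow> P 0 \<or> P 1 \<or> P 2 \<or> P 3"
  by (auto simp: eval_nat_numeral less_Suc_eq)

lemma eigJ: "is_eigenvalue 4 JJ l \<longleftrightarrow> l = 0 \<or> l = 4"
proof
  assume "is_eigenvalue 4 JJ l"
  then obtain v where nz0: "\<exists>i<4. v i \<noteq> 0" and e0: "\<forall>i<4. mat_vec 4 JJ v i = l * v i"
    unfolding is_eigenvalue_def by blast
  have nz: "v 0 \<noteq> 0 \<or> v 1 \<noteq> 0 \<or> v 2 \<noteq> 0 \<or> v 3 \<noteq> 0" using nz0 unfolding exi4 .
  have e: "v 0 + v 1 + v 2 + v 3 = l * v 0" "v 0 + v 1 + v 2 + v 3 = l * v 1"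
     "v 0 + v 1 + v 2 + v 3 = l * v 2" "v 0 + v 1 + v 2 + v 3 = l * v 3"
    using e0 unfolding all4 mvJ by auto
  show "l = 0 \<or> l = 4"
  proof (rule ccontr)
    assume h: "\<not> (l = 0 \<or> l = 4)"
    have d: "l * (v 0 + v 1 + v 2 + v 3) = l * v 0 + l * v 1 + l * v 2 + l * v 3" by (simp add: algebra_simps)
    have "4 * (v 0 + v 1 + v 2 + v 3) = l * (v 0 + v 1 + v 2 + v 3)" unfolding d e[symmetric] by simp
    hence "(4 - l) * (v 0 + v 1 + v 2 + v 3) = 0" by (simp only: left_diff_distrib)
    hence "v 0 + v 1 + v 2 + v 3 = 0" using h by simp
    hence "l * v 0 = 0" "l * v 1 = 0" "l * v 2 = 0" "l * v 3 = 0" using e by simp_all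
    hence "v 0 = 0" "v 1 = 0" "v 2 = 0" "v 3 = 0" using h by simp_all
    thus False using nz by simp
  qed
next
  assume "l = 0 \<or> l = 4"
  then show "is_eigenvalue 4 JJ l"
  proof
    assume "l = 0" thus ?thesis unfolding is_eigenvalue_def exi4 all4 mvJ
      by (rule_tac x="\<lambda>i. if i = 0 then 1 else if i = 1 then -1 else 0" in exI) simp
  next
    assume "l = 4" thus ?thesis unfolding is_eigenvalue_def exi4 all4 mvJ
      by (rule_tac x="\<lambda>i. 1" in exI) simp
  qed
qed

lemma lmJ: "lambda_max 4 JJ = 4"
  unfolding lambda_max_def
proof (rule Greatest_equality)
  show "is_eigenvalue 4 JJ 4" by (simp add: eigJ)
  fix y assume "is_eigenvalue 4 JJ y"
  thus "y \<le> 4" by (auto simp: eigJ)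
qed

definition LL :: real where "LL = (9 + sqrt 73) / 4"

lemma LL_eq: "LL * LL - 9/2 * LL + 1/2 = 0"
proof -
  define r where "r = sqrt 73"
  have rr: "r * r = 73" unfolding r_def by simp
  have L: "LL = (9 + r)/4" unfolding LL_def r_def ..
  have "LL * LL = (81 + 18*r + r*r)/16" unfolding L by (simp add: field_simps)
  thus ?thesis using rr L by simp
qed

lemma LL_gt: "LL > 7/2"
proof -
  have "sqrt 73 > 5" by (rule real_less_rsqrt) simp
  thus ?thesis unfolding LL_def by simp
qed

lemma diffs:
  fixes l :: real and v :: "nat \<Rightarrow> real"
  assumes "v 0 + 2 * v 1 + v 2 / 2 + v 3 = l * v 0"
    "v 0 / 2 + v 1 + 2 * v 2 + v 3 = l * v 1"
    "2 * v 0 + v 1 / 2 + v 2 + v 3 = l * v 2"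
  shows "v 1 = v 0 \<and> v 2 = v 0"
proof -
  define d0 where "d0 = v 0 - v 1"
  define d1 where "d1 = v 1 - v 2"
  have e1: "d0 / 2 + 3/2 * d1 = l * d0" using assms unfolding d0_def d1_def by (simp add: field_simps)
  have e2: "- 3/2 * d0 - d1 = l * d1" using assms unfolding d0_def d1_def by (simp add: field_simps)
  have "d1 * (d0 / 2 + 3/2 * d1) - d0 * (- 3/2 * d0 - d1) = d1 * (l * d0) - d0 * (l * d1)"
    by (simp only: e1 e2)
  hence h: "d1 * (d0 / 2 + 3/2 * d1) - d0 * (- 3/2 * d0 - d1) = 0" by simp
  have "(d0 + d1)^2 + d0^2 + d1^2 = 4/3 * (d1 * (d0 / 2 + 3/2 * d1) - d0 * (- 3/2 * d0 - d1))"
    by (simp add: field_simps power2_eq_square)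
  hence s: "(d0 + d1)^2 + d0^2 + d1^2 = 0" using h by simp
  have "d0^2 = 0" using s by (smt (verit) zero_le_power2)
  moreover have "d1^2 = 0" using s by (smt (verit) zero_le_power2)
  ultimately have "d0 = 0 \<and> d1 = 0" by simp
  thus ?thesis unfolding d0_def d1_def by simp
qed

lemma eigA_imp: "is_eigenvalue 4 AA l \<Longrightarrow> l * l - 9/2 * l + 1/2 = 0"
proof -
  assume "is_eigenvalue 4 AA l"
  then obtain v where nz0: "\<exists>i<4. v i \<noteq> 0" and e0: "\<forall>i<4. mat_vec 4 AA v i = l * v i"
    unfolding is_eigenvalue_def by blast
  have nz: "v 0 \<noteq> 0 \<or> v 1 \<noteq> 0 \<or> v 2 \<noteq> 0 \<or> v 3 \<noteq> 0" using nz0 unfolding exi4 .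
  have e: "v 0 + 2 * v 1 + v 2 / 2 + v 3 = l * v 0"
    "v 0 / 2 + v 1 + 2 * v 2 + v 3 = l * v 1"
    "2 * v 0 + v 1 / 2 + v 2 + v 3 = l * v 2" "v 0 + v 1 + v 2 + v 3 = l * v 3"
    using e0 unfolding all4 mvA by blast+
  from diffs[OF e(1-3)] have d: "v 1 = v 0" "v 2 = v 0" by auto
  have a: "v 3 = (l - 7/2) * v 0" using e(1) d by (simp add: algebra_simps)
  have b: "3 * v 0 = (l - 1) * v 3" using e(4) d by (simp add: algebra_simps)
  have "v 0 \<noteq> 0" using nz d a by auto
  moreover have "(3 - (l - 1) * (l - 7/2)) * v 0 = 0"
  proof -
    have b2: "3 * v 0 = (l - 1) * ((l - 7/2) * v 0)" using b unfolding a .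
    have "(3 - (l - 1) * (l - 7/2)) * v 0 = 3 * v 0 - (l - 1) * ((l - 7/2) * v 0)"
      by (simp add: algebra_simps)
    thus ?thesis using b2 by simp
  qed
  ultimately have z: "3 - (l - 1) * (l - 7/2) = 0" by simp
  have "l * l - 9/2 * l + 1/2 = - (3 - (l - 1) * (l - 7/2))" by (simp add: field_simps)
  thus ?thesis using z by simp
qed

lemma eigA_LL: "is_eigenvalue 4 AA LL"
  unfolding is_eigenvalue_def exi4 all4 mvA
  apply (rule_tac x="\<lambda>i. if i = 3 then LL - 7/2 else 1" in exI)
  using LL_eq by (simp add: algebra_simps)

lemma lmA: "lambda_max 4 AA = LL"
  unfolding lambda_max_def
proof (rule Greatest_equality)
  show "is_eigenvalue 4 AA LL" by (rule eigA_LL)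
  fix y assume "is_eigenvalue 4 AA y"
  hence q: "y * y - 9/2 * y + 1/2 = 0" by (rule eigA_imp)
  have "(y - LL) * (y - (9/2 - LL)) = (y * y - 9/2 * y + 1/2) - (LL * LL - 9/2 * LL + 1/2)"
    by (simp add: field_simps)
  hence "(y - LL) * (y - (9/2 - LL)) = 0" using q LL_eq by simp
  hence "y = LL \<or> y = 9/2 - LL" by simp
  thus "y \<le> LL" using LL_gt by auto
qed

lemma EM_I:
  assumes "(\<forall>i<n. w i > 0) \<and> (\<forall>i. i \<ge> n \<longrightarrow> w i = 0) \<and> (\<Sum>i<n. w i) = 1 \<and>
      (\<forall>i<n. mat_vec n A w i = lambda_max n A * w i)"
    and "\<And>v. (\<forall>i<n. v i > 0) \<and> (\<forall>i. i \<ge> n \<longrightarrow> v i = 0) \<and> (\<Sum>i<n. v i) = 1 \<and>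
      (\<forall>i<n. mat_vec n A v i = lambda_max n A * v i) \<Longrightarrow> v = w"
  shows "EM n A = w"
  unfolding EM_def
  apply (rule the_equality)
   apply (rule assms(1))
  apply (erule assms(2))
  done

definition PJ where "PJ w \<longleftrightarrow> (\<forall>i<4. w i > 0) \<and> (\<forall>i. i \<ge> 4 \<longrightarrow> w i = 0) \<and>
                    (\<Sum>i<4. w i) = (1::real) \<and> (\<forall>i<4. mat_vec 4 JJ w i = 4 * w i)"
definition PA where "PA w \<longleftrightarrow> (\<forall>i<4. w i > 0) \<and> (\<forall>i. i \<ge> 4 \<longrightarrow> w i = 0) \<and>
                    (\<Sum>i<4. w i) = (1::real) \<and> (\<forall>i<4. mat_vec 4 AA w i = LL * w i)"

lemma EMJ: "EM 4 JJ 3 = EM 4 JJ 0"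
proof -
  define u :: "nat \<Rightarrow> real" where "u = (\<lambda>i. if i < 4 then 1/4 else 0)"
  have uv: "u 0 = 1/4" "u 1 = 1/4" "u 2 = 1/4" "u 3 = 1/4" by (simp_all add: u_def)
  have uz: "\<forall>i. i \<ge> 4 \<longrightarrow> u i = 0" by (simp add: u_def)
  have pu: "PJ u" unfolding PJ_def all4 mvJ sum4
    apply (intro conjI)
    using uv uz apply simp_all
    done
  have uniq: "w = u" if "PJ w" for w
  proof
    fix i
    have e: "w 0 + w 1 + w 2 + w 3 = 1" "w 0 + w 1 + w 2 + w 3 = 4 * w 0"
      "w 0 + w 1 + w 2 + w 3 = 4 * w 1" "w 0 + w 1 + w 2 + w 3 = 4 * w 2"
      "w 0 + w 1 + w 2 + w 3 = 4 * w 3"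
      using that unfolding PJ_def all4 mvJ sum4 by blast+
    have w: "w 0 = 1/4" "w 1 = 1/4" "w 2 = 1/4" "w 3 = 1/4" using e by linarith+
    show "w i = u i"
    proof (cases "i < 4")
      case True
      then consider "i = 0" | "i = 1" | "i = 2" | "i = 3" by (auto simp: eval_nat_numeral less_Suc_eq)
      thus ?thesis using w unfolding u_def by cases simp_all
    next
      case False
      hence "w i = 0" using that unfolding PJ_def by simp
      thus ?thesis using False unfolding u_def by simp
    qed
  qed
  have "EM 4 JJ = u"
    apply (rule EM_I)
    using pu apply (simp add: PJ_def lmJ)
    apply (rule uniq)
    apply (simp add: PJ_def lmJ)
    done
  thus ?thesis unfolding u_def by simp
qed

lemma EMA: "EM 4 AA 3 \<noteq> EM 4 AA 0"
proof -
  define a where "a = 1 / (LL - 1/2)"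
  define u :: "nat \<Rightarrow> real" where "u = (\<lambda>i. if i < 3 then a else if i = 3 then (LL - 7/2) * a else 0)"
  have apos: "a > 0" unfolding a_def using LL_gt by simp
  have s1: "(LL - 1/2) * a = 1" unfolding a_def using LL_gt by simp
  have r3: "3 * a + (LL - 7/2) * a = LL * ((LL - 7/2) * a)"
  proof -
    have "LL * ((LL - 7/2) * a) - (3 * a + (LL - 7/2) * a) = (LL * LL - 9/2 * LL + 1/2) * a"
      by (simp add: algebra_simps)
    thus ?thesis using LL_eq by simp
  qed
  have p3: "(LL - 7/2) * a > 0" using apos LL_gt by simp
  have pu: "PA u" unfolding PA_def all4 mvA sum4 u_def
    using apos LL_gt s1 r3 p3 by (simp add: algebra_simps)
  have uniq: "w = u" if "PA w" for w
  proof -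
    have e: "w 0 + w 1 + w 2 + w 3 = 1" "w 0 + 2 * w 1 + w 2 / 2 + w 3 = LL * w 0"
      "w 0 / 2 + w 1 + 2 * w 2 + w 3 = LL * w 1"
      "2 * w 0 + w 1 / 2 + w 2 + w 3 = LL * w 2"
      using that unfolding PA_def all4 mvA sum4 by auto
    from diffs[OF e(2-4)] have d: "w 1 = w 0" "w 2 = w 0" by auto
    have w3: "w 3 = (LL - 7/2) * w 0" using e(2) d by (simp add: algebra_simps)
    have "(LL - 1/2) * w 0 = 1" using e(1) d w3 by (simp add: algebra_simps)
    hence w0: "w 0 = a" unfolding a_def using LL_gt by (simp add: field_simps)
    show ?thesis
    proof
      fix i
      show "w i = u i"
      proof (cases "i < 4")
        case True
        then consider "i = 0" | "i = 1" | "i = 2" | "i = 3" by (auto simp: eval_nat_numeral less_Suc_eq)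
        thus ?thesis using d w3 w0 unfolding u_def by cases auto
      next
        case False thus ?thesis using that unfolding PA_def u_def by auto
      qed
    qed
  qed
  have "EM 4 AA = u"
    apply (rule EM_I)
    using pu apply (simp add: PA_def lmA)
    apply (rule uniq)
    apply (simp add: PA_def lmA)
    done
  moreover have "(LL - 7/2) * a \<noteq> a"
  proof
    assume "(LL - 7/2) * a = a"
    hence L: "LL = 9/2" using apos by (simp add: algebra_simps)
    show False using LL_eq unfolding L by simp
  qed
  ultimately show ?thesis unfolding u_def by simp
qed

theorem proposition3p2:
  shows "\<exists>n A A' \<alpha> i j k.
           n = 4 \<and> is_PCM n A \<and> is_PCM n A' \<and>
           \<alpha> > 0 \<and> i < n \<and> j < n \<and> k < n \<and> i \<noteq> j \<and> j \<noteq> k \<and> i \<noteq> k \<and>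
           A' = alpha_transform \<alpha> i j k A \<and>
           EM n A \<noteq> EM n A'"
proof -
  have p1: "is_PCM 4 JJ" unfolding is_PCM_def all4 by (simp add: JJ_def)
  have p2: "is_PCM 4 AA" unfolding is_PCM_def all4 by (simp add: AA_def JJ_def alpha_transform_def)
  have ne: "EM 4 JJ \<noteq> EM 4 AA" using EMJ EMA by metis
  have aeq: "AA = alpha_transform 2 0 1 2 JJ" by (simp add: AA_def)
  show ?thesis
    apply (rule exI[of _ "4::nat"], rule exI[of _ JJ], rule exI[of _ AA], rule exI[of _ "2::real"],
        rule exI[of _ "0::nat"], rule exI[of _ "1::nat"], rule exI[of _ "2::nat"])
    by (intro conjI refl p1 p2 ne aeq) simp_all
qed

end
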